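(* Consider an elementary cube of $\mathbb Z^3$ with black base vertex $n$ and black fields $x=x(n)$, $x_{12},x_{23},x_{31}$ (at $n+e_1+e_2$, $n+e_2+e_3$, $n+e_3+e_1$). For each cyclic permutation $(i,j,k)$ of $(1,2,3)$ let $a^{ij},b^{ij},c^{ij},a^{ij}_k,b^{ij}_k,c^{ij}_k$ be nonzero complex numbers with $$b^{ij}c^{ij}=(a^{ij})^2,\qquad b^{ij}_kc^{ij}_k=(a^{ij}_k)^2,$$ and $b^{12}+b^{23}+b^{31}\neq0$. Let $$S^{123}=\sum_{(i,j,k)}\Big(\tfrac12(b^{ij}_kx_{jk}^2+c^{ij}_kx_{ki}^2)-a^{ij}_kx_{jk}x_{ki}-\tfrac12(b^{ij}x^2+c^{ij}x_{ij}^2)+a^{ij}xx_{ij}\Big),$$ summed over the three cyclic permutations. Then the four linear corner equations $\partial S^{123}/\partial x=0$, $\partial S^{123}/\partial x_{12}=0$, $\partial S^{123}/\partial x_{23}=0$, $\partial S^{123}/\partial x_{31}=0$ have rank 1 (are all proportional) if and only if $$a^{12}_3=\frac{a^{23}a^{31}}{\Sigma},\ a^{23}_1=\frac{a^{31}a^{12}}{\Sigma},\ a^{31}_2=\frac{a^{12}a^{23}}{\Sigma},$$ $$b^{12}_3=\frac{c^{23}b^{31}}{\Sigma},\ b^{23}_1=\frac{c^{31}b^{12}}{\Sigma},\ b^{31}_2=\frac{c^{12}b^{23}}{\Sigma},\qquad c^{12}_3=\frac{b^{23}c^{31}}{\Sigma},\ c^{23}_1=\frac{b^{31}c^{12}}{\Sigma},\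 c^{31}_2=\frac{b^{12}c^{23}}{\Sigma},$$ where $\Sigma=b^{12}+b^{23}+b^{31}$.
   Context: $S^{123}$ is the action over the boundary of the cube of the discrete 2-form $\mathcal L(\sigma^{ij})=\frac12(b^{ij}x^2+c^{ij}x_{ij}^2)-a^{ij}xx_{ij}$ on the three plaquettes at $n$ and $\mathcal L(\sigma^{ij}_k)=\frac12(b^{ij}_kx_{jk}^2+c^{ij}_kx_{ki}^2)-a^{ij}_kx_{jk}x_{ki}$ on the opposite plaquettes (whose black vertices are $n+e_j+e_k$ and $n+e_k+e_i$); the conditions $bc=a^2$ say each of these quadratic forms is a complete square. Rank 1 of the corner system is the paper's notion of consistency (forming a pluri-Lagrangian system). *)

theory Defs
  imports "HOL-Analysis.Analysis"
begin

definition S123 ::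
  "complex \<Rightarrow> complex \<Rightarrow> complex \<Rightarrow> complex \<Rightarrow> complex \<Rightarrow> complex \<Rightarrow>
   complex \<Rightarrow> complex \<Rightarrow> complex \<Rightarrow> complex \<Rightarrow> complex \<Rightarrow> complex \<Rightarrow>
   complex \<Rightarrow> complex \<Rightarrow> complex \<Rightarrow> complex \<Rightarrow> complex \<Rightarrow> complex \<Rightarrow>
   complex^4 \<Rightarrow> complex" where
  "S123 a12 b12 c12 a23 b23 c23 a31 b31 c31
        a12_3 b12_3 c12_3 a23_1 b23_1 c23_1 a31_2 b31_2 c31_2 v =
    (let x = v$1; x12 = v$2; x23 = v$3; x31 = v$4 in
      (1/2 * (b12_3 * x23^2 + c12_3 * x31^2) - a12_3 * x23 * x31
        - 1/2 * (b12 * x^2 + c12 * x12^2) + a12 * x * x12)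
    + (1/2 * (b23_1 * x31^2 + c23_1 * x12^2) - a23_1 * x31 * x12
        - 1/2 * (b23 * x^2 + c23 * x23^2) + a23 * x * x23)
    + (1/2 * (b31_2 * x12^2 + c31_2 * x23^2) - a31_2 * x12 * x23
        - 1/2 * (b31 * x^2 + c31 * x31^2) + a31 * x * x31))"

definition partial :: "(complex^4 \<Rightarrow> complex) \<Rightarrow> 4 \<Rightarrow> complex^4 \<Rightarrow> complex" where
  "partial S i v = deriv (\<lambda>t. S (v + axis i t)) 0"

text \<open>Coefficient matrix of the (linear, homogeneous) corner equations
  \<partial>S/\<partial>v_i = 0, i = 1..4: entry (i,j) is the coefficient of v_j in \<partial>S/\<partial>v_i.\<close>
definition corner_matrix :: "(complex^4 \<Rightarrow> complex) \<Rightarrow> complex^4^4" where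
  "corner_matrix S = (\<chi> i j. partial S i (axis j 1))"

end

theory Submission
  imports Defs
begin

lemma deriv_quad: "deriv (\<lambda>t. qa + qb*t + qc*t^2) 0 = (qb::complex)"
  by (rule DERIV_imp_deriv) (auto intro!: derivative_eq_intros)

lemma partial_quad:
  assumes "\<And>t. S (v + axis i t) = qa + qb*t + qc*t^2"
  shows "partial S i v = qb"
  unfolding partial_def assms by (rule deriv_quad)

lemma p1: "partial (S123 a12 b12 c12 a23 b23 c23 a31 b31 c31 a12_3 b12_3 c12_3 a23_1 b23_1 c23_1 a31_2 b31_2 c31_2) 1 v = -(b12+b23+b31) * v$1 + a12 * v$2 + a23 * v$3 + a31 * v$4"
  apply (rule partial_quad[where qa = "S123 a12 b12 c12 a23 b23 c23 a31 b31 c31 a12_3 b12_3 c12_3 a23_1 b23_1 c23_1 a31_2 b31_2 c31_2 v" and qc = "-(b12+b23+b31)/2"])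
  apply (simp add: S123_def Let_def axis_def)
  apply (simp add: field_simps power2_eq_square)
  done

lemma p2: "partial (S123 a12 b12 c12 a23 b23 c23 a31 b31 c31 a12_3 b12_3 c12_3 a23_1 b23_1 c23_1 a31_2 b31_2 c31_2) 2 v = a12 * v$1 + (c23_1 + b31_2 - c12) * v$2 - a31_2 * v$3 - a23_1 * v$4"
  apply (rule partial_quad[where qa = "S123 a12 b12 c12 a23 b23 c23 a31 b31 c31 a12_3 b12_3 c12_3 a23_1 b23_1 c23_1 a31_2 b31_2 c31_2 v" and qc = "(c23_1 + b31_2 - c12)/2"])
  apply (simp add: S123_def Let_def axis_def)
  apply (simp add: field_simps power2_eq_square)
  done

lemma p3: "partial (S123 a12 b12 c12 a23 b23 c23 a31 b31 c31 a12_3 b12_3 c12_3 a23_1 b23_1 c23_1 a31_2 b31_2 c31_2) 3 v = a23 * v$1 - a31_2 * v$2 + (b12_3 + c31_2 - c23) * v$3 - a12_3 * v$4"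
  apply (rule partial_quad[where qa = "S123 a12 b12 c12 a23 b23 c23 a31 b31 c31 a12_3 b12_3 c12_3 a23_1 b23_1 c23_1 a31_2 b31_2 c31_2 v" and qc = "(b12_3 + c31_2 - c23)/2"])
  apply (simp add: S123_def Let_def axis_def)
  apply (simp add: field_simps power2_eq_square)
  done

lemma p4: "partial (S123 a12 b12 c12 a23 b23 c23 a31 b31 c31 a12_3 b12_3 c12_3 a23_1 b23_1 c23_1 a31_2 b31_2 c31_2) 4 v = a31 * v$1 - a23_1 * v$2 - a12_3 * v$3 + (c12_3 + b23_1 - c31) * v$4"
  apply (rule partial_quad[where qa = "S123 a12 b12 c12 a23 b23 c23 a31 b31 c31 a12_3 b12_3 c12_3 a23_1 b23_1 c23_1 a31_2 b31_2 c31_2 v" and qc = "(c12_3 + b23_1 - c31)/2"])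
  apply (simp add: S123_def Let_def axis_def)
  apply (simp add: field_simps power2_eq_square)
  done

lemma rank_one_iff:
  fixes A :: "'a::field^'n^'m"
  assumes nz: "A$k$l \<noteq> 0"
  shows "rank A = 1 \<longleftrightarrow> (\<forall>i j. A$i$j * A$k$l = A$i$l * A$k$j)"
proof
  let ?r = "row k A"
  have rnz: "?r \<noteq> 0" using nz by (auto simp: row_def vec_eq_iff)
  have rin: "?r \<in> rows A" by (auto simp: rows_def)
  assume "rank A = 1"
  hence d: "vec.dim (rows A) = 1" by (simp add: row_rank_def_gen)
  show "\<forall>i j. A$i$j * A$k$l = A$i$l * A$k$j"
  proof (intro allI)
    fix i j
    have "row i A \<in> vec.span {?r}"
    proof (rule ccontr)
      assume nin: "row i A \<notin> vec.span {?r}"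
      hence ne: "row i A \<noteq> ?r" using vec.span_base by blast
      have ind: "vec.independent {row i A, ?r}"
        using nin rnz by (simp add: vec.independent_insert)
      have "card {row i A, ?r} \<le> vec.dim (rows A)"
        by (rule vec.independent_card_le_dim) (use rin ind in \<open>auto simp: rows_def\<close>)
      with ne d show False by simp
    qed
    then obtain c where c: "row i A = c *s ?r" by (auto simp: vec.span_singleton)
    hence "A$i$j = c * A$k$j" "A$i$l = c * A$k$l"
      using c by (simp_all add: row_def vec_eq_iff)
    thus "A$i$j * A$k$l = A$i$l * A$k$j" by simp
  qed
next
  let ?r = "row k A"
  have rnz: "?r \<noteq> 0" using nz by (auto simp: row_def vec_eq_iff)
  have rin: "?r \<in> rows A" by (auto simp: rows_def)
  assume h: "\<forall>i j. A$i$j * A$k$l = A$i$l * A$k$j"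
  have "row i A = (A$i$l / A$k$l) *s ?r" for i
  proof -
    have e: "A$i$j = (A$i$l / A$k$l) * A$k$j" for j
    proof -
      have "A$i$j * A$k$l = A$i$l * A$k$j" using h by blast
      thus ?thesis using nz by (metis nonzero_mult_div_cancel_right times_divide_eq_left)
    qed
    show ?thesis unfolding vec_eq_iff
    proof
      fix j show "row i A $ j = (A $ i $ l / A $ k $ l *s row k A) $ j"
        unfolding row_def vector_smult_component vec_lambda_beta by (rule e)
    qed
  qed
  hence sub: "rows A \<subseteq> vec.span {?r}"
    unfolding rows_def vec.span_singleton by blast
  have "vec.span (rows A) = vec.span {?r}"
    unfolding vec.span_eq using sub rin vec.span_base by blast
  hence "vec.dim (rows A) = vec.dim {?r}"
    by (metis vec.dim_span)
  thus "rank A = 1" using rnz by (simp add: row_rank_def_gen)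
qed
lemma uvw:
  fixes P Q R u v w :: complex
  assumes "P \<noteq> 0" "Q \<noteq> 0" "R \<noteq> 0" "P + Q + R \<noteq> 0" "u \<noteq> 0" "v \<noteq> 0" "w \<noteq> 0"
    and e1: "R * u * (v - 1) = P * (u - 1)"
    and e2: "P * v * (w - 1) = Q * (v - 1)"
    and e3: "Q * w * (u - 1) = R * (w - 1)"
  shows "u = 1 \<and> v = 1 \<and> w = 1"
proof (cases "u = 1")
  case True
  then show ?thesis using assms by auto
next
  case False
  hence v1: "v \<noteq> 1" using e1 assms by auto
  hence w1: "w \<noteq> 1" using e2 assms by auto
  have "(R * u * (v - 1)) * (P * v * (w - 1)) * (Q * w * (u - 1)) = (P * (u - 1)) * (Q * (v - 1)) * (R * (w - 1))"
    using e1 e2 e3 by simp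
  hence "(P * Q * R * (u - 1) * (v - 1) * (w - 1)) * (u * v * w) = (P * Q * R * (u - 1) * (v - 1) * (w - 1)) * 1"
    by (simp add: algebra_simps)
  hence uvw: "u * v * w = 1" using False v1 w1 assms by simp
  have a: "w * (R - Q * (u - 1)) = R" using e3 by (simp add: algebra_simps)
  have b: "R * u * v = R * u + P * (u - 1)" using e1 by (simp add: algebra_simps)
  have "R * (u * v * w) = (R * u * v) * w" by (simp add: ac_simps)
  also have "\<dots> = w * (R * u + P * (u - 1))" using b by simp
  finally have "R * (u * v * w) = w * (R * u + P * (u - 1))" .
  hence "w * (R * u + P * (u - 1)) = w * (R - Q * (u - 1))" using uvw a by simp
  hence "R * u + P * (u - 1) = R - Q * (u - 1)" using assms by simp
  hence "(P + Q + R) * (u - 1) = 0" by (simp add: algebra_simps)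
  thus ?thesis using False assms by simp
qed
lemma rank_cond:
  assumes "b12 + b23 + b31 \<noteq> 0" and sdef: "s = b12 + b23 + b31"
  shows "rank (corner_matrix (S123 a12 b12 c12 a23 b23 c23 a31 b31 c31 a12_3 b12_3 c12_3 a23_1 b23_1 c23_1 a31_2 b31_2 c31_2)) = 1 \<longleftrightarrow> ((c23_1 + b31_2 - c12) * s = - (a12^2) \<and> a31_2 * s = a12 * a23 \<and> a23_1 * s = a12 * a31 \<and>
          (b12_3 + c31_2 - c23) * s = - (a23^2) \<and> a12_3 * s = a23 * a31 \<and>
          (c12_3 + b23_1 - c31) * s = - (a31^2))"
proof -
  let ?M = "corner_matrix (S123 a12 b12 c12 a23 b23 c23 a31 b31 c31 a12_3 b12_3 c12_3 a23_1 b23_1 c23_1 a31_2 b31_2 c31_2)"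
  have M11: "?M $ 1 $ 1 = -(b12 + b23 + b31)" by (simp add: corner_matrix_def p1 axis_def)
  have "?M $ 1 $ 1 \<noteq> 0" unfolding M11 neg_equal_0_iff_equal by (rule assms)
  hence "rank ?M = 1 \<longleftrightarrow> (\<forall>i j. ?M$i$j * ?M$1$1 = ?M$i$1 * ?M$1$j)" by (rule rank_one_iff)
  also have "\<dots> \<longleftrightarrow> ((c23_1 + b31_2 - c12) * s = - (a12^2) \<and> a31_2 * s = a12 * a23 \<and> a23_1 * s = a12 * a31 \<and>
          (b12_3 + c31_2 - c23) * s = - (a23^2) \<and> a12_3 * s = a23 * a31 \<and>
          (c12_3 + b23_1 - c31) * s = - (a31^2))"
    unfolding sdef
    apply (simp add: forall_4 corner_matrix_def p1 p2 p3 p4 axis_def)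
    apply (simp add: algebra_simps power2_eq_square)
    apply auto
    done
  finally show ?thesis .
qed

lemma alg:
  fixes a12 b12 c12 a23 b23 c23 a31 b31 c31
        a12_3 b12_3 c12_3 a23_1 b23_1 c23_1 a31_2 b31_2 c31_2 s :: complex
  assumes nz: "a12 \<noteq> 0" "b12 \<noteq> 0" "c12 \<noteq> 0" "a23 \<noteq> 0" "b23 \<noteq> 0" "c23 \<noteq> 0"
              "a31 \<noteq> 0" "b31 \<noteq> 0" "c31 \<noteq> 0"
              "a12_3 \<noteq> 0" "b12_3 \<noteq> 0" "c12_3 \<noteq> 0" "a23_1 \<noteq> 0" "b23_1 \<noteq> 0" "c23_1 \<noteq> 0"
              "a31_2 \<noteq> 0" "b31_2 \<noteq> 0" "c31_2 \<noteq> 0"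
    and sq: "b12 * c12 = a12^2" "b23 * c23 = a23^2" "b31 * c31 = a31^2"
            "b12_3 * c12_3 = a12_3^2" "b23_1 * c23_1 = a23_1^2" "b31_2 * c31_2 = a31_2^2"
    and sdef: "s = b12 + b23 + b31" and snz: "s \<noteq> 0"
  shows "((c23_1 + b31_2 - c12) * s = - (a12^2) \<and> a31_2 * s = a12 * a23 \<and> a23_1 * s = a12 * a31 \<and>
          (b12_3 + c31_2 - c23) * s = - (a23^2) \<and> a12_3 * s = a23 * a31 \<and>
          (c12_3 + b23_1 - c31) * s = - (a31^2))
    \<longleftrightarrow>
      (a12_3 = a23 * a31 / s \<and> a23_1 = a31 * a12 / s \<and> a31_2 = a12 * a23 / s \<and>
      b12_3 = c23 * b31 / s \<and> b23_1 = c31 * b12 / s \<and> b31_2 = c12 * b23 / s \<and>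
      c12_3 = b23 * c31 / s \<and> c23_1 = b31 * c12 / s \<and> c31_2 = b12 * c23 / s)"
proof
  assume T: "a12_3 = a23 * a31 / s \<and> a23_1 = a31 * a12 / s \<and> a31_2 = a12 * a23 / s \<and>
      b12_3 = c23 * b31 / s \<and> b23_1 = c31 * b12 / s \<and> b31_2 = c12 * b23 / s \<and>
      c12_3 = b23 * c31 / s \<and> c23_1 = b31 * c12 / s \<and> c31_2 = b12 * c23 / s"
  have d1: "(c23_1 + b31_2 - c12) * s = - (a12^2)"
  proof -
    have "(c23_1 + b31_2 - c12) * s = c12 * (b31 + b23 - s)" using T snz by (simp add: field_simps)
    also have "\<dots> = - (b12 * c12)" using sdef by (simp add: algebra_simps)
    finally show ?thesis using sq by simp
  qed
  have d2: "(b12_3 + c31_2 - c23) * s = - (a23^2)"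
  proof -
    have "(b12_3 + c31_2 - c23) * s = c23 * (b31 + b12 - s)" using T snz by (simp add: field_simps)
    also have "\<dots> = - (b23 * c23)" using sdef by (simp add: algebra_simps)
    finally show ?thesis using sq by simp
  qed
  have d3: "(c12_3 + b23_1 - c31) * s = - (a31^2)"
  proof -
    have "(c12_3 + b23_1 - c31) * s = c31 * (b23 + b12 - s)" using T snz by (simp add: field_simps)
    also have "\<dots> = - (b31 * c31)" using sdef by (simp add: algebra_simps)
    finally show ?thesis using sq by simp
  qed
  show "(c23_1 + b31_2 - c12) * s = - (a12^2) \<and> a31_2 * s = a12 * a23 \<and> a23_1 * s = a12 * a31 \<and>
          (b12_3 + c31_2 - c23) * s = - (a23^2) \<and> a12_3 * s = a23 * a31 \<and>
          (c12_3 + b23_1 - c31) * s = - (a31^2)"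
  proof -
    have "a31_2 * s = a12 * a23" "a23_1 * s = a12 * a31" "a12_3 * s = a23 * a31"
      using T snz by (simp_all add: field_simps)
    thus ?thesis using d1 d2 d3 by blast
  qed
next
  assume E: "(c23_1 + b31_2 - c12) * s = - (a12^2) \<and> a31_2 * s = a12 * a23 \<and> a23_1 * s = a12 * a31 \<and>
          (b12_3 + c31_2 - c23) * s = - (a23^2) \<and> a12_3 * s = a23 * a31 \<and>
          (c12_3 + b23_1 - c31) * s = - (a31^2)"
  define u where "u = b31_2 * s / (c12 * b23)"
  define v where "v = b12_3 * s / (c23 * b31)"
  define w where "w = b23_1 * s / (c31 * b12)"
  have bu: "b31_2 * s = c12 * b23 * u" using nz unfolding u_def by simp
  have bv: "b12_3 * s = c23 * b31 * v" using nz unfolding v_def by simp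
  have bw: "b23_1 * s = c31 * b12 * w" using nz unfolding w_def by simp
  have unz: "u \<noteq> 0" "v \<noteq> 0" "w \<noteq> 0" using nz snz unfolding u_def v_def w_def by auto
  have cu: "c31_2 * s * u = b12 * c23"
  proof -
    have "(b31_2 * s) * (c31_2 * s) = (a31_2 * s)^2" using sq by (simp add: power2_eq_square algebra_simps)
    also have "\<dots> = (b12 * c12) * (b23 * c23)" using E sq by (simp add: power_mult_distrib)
    finally have "(c12 * b23) * (c31_2 * s * u) = (c12 * b23) * (b12 * c23)" unfolding bu by (simp add: algebra_simps)
    thus ?thesis using nz by simp
  qed
  have cv: "c12_3 * s * v = b23 * c31"
  proof -
    have "(b12_3 * s) * (c12_3 * s) = (a12_3 * s)^2" using sq by (simp add: power2_eq_square algebra_simps)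
    also have "\<dots> = (b23 * c23) * (b31 * c31)" using E sq by (simp add: power_mult_distrib)
    finally have "(c23 * b31) * (c12_3 * s * v) = (c23 * b31) * (b23 * c31)" unfolding bv by (simp add: algebra_simps)
    thus ?thesis using nz by simp
  qed
  have cw: "c23_1 * s * w = b31 * c12"
  proof -
    have "(b23_1 * s) * (c23_1 * s) = (a23_1 * s)^2" using sq by (simp add: power2_eq_square algebra_simps)
    also have "\<dots> = (b31 * c31) * (b12 * c12)" using E sq by (simp add: power_mult_distrib)
    finally have "(c31 * b12) * (c23_1 * s * w) = (c31 * b12) * (b31 * c12)" unfolding bw by (simp add: algebra_simps)
    thus ?thesis using nz by simp
  qed
  have e1: "b31 * u * (v - 1) = b12 * (u - 1)"
  proof -
    have "(b12_3 * s + c31_2 * s) * u = c23 * (b12 + b31) * u"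
      using E sq sdef by (simp add: algebra_simps power2_eq_square)
    hence "c23 * (b31 * u * v + b12) = c23 * ((b12 + b31) * u)"
      unfolding bv distrib_right cu by (simp add: algebra_simps)
    hence "b31 * u * v + b12 = (b12 + b31) * u" using nz by simp
    thus ?thesis by (simp add: algebra_simps)
  qed
  have e2: "b12 * v * (w - 1) = b23 * (v - 1)"
  proof -
    have "(c12_3 * s + b23_1 * s) * v = c31 * (b12 + b23) * v"
      using E sq sdef by (simp add: algebra_simps power2_eq_square)
    hence "c31 * (b23 + b12 * w * v) = c31 * ((b12 + b23) * v)"
      unfolding bw distrib_right cv by (simp add: algebra_simps)
    hence "b23 + b12 * w * v = (b12 + b23) * v" using nz by simp
    thus ?thesis by (simp add: algebra_simps)
  qed
  have e3: "b23 * w * (u - 1) = b31 * (w - 1)"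
  proof -
    have "(c23_1 * s + b31_2 * s) * w = c12 * (b23 + b31) * w"
      using E sq sdef by (simp add: algebra_simps power2_eq_square)
    hence "c12 * (b31 + b23 * u * w) = c12 * ((b23 + b31) * w)"
      unfolding bu distrib_right cw by (simp add: algebra_simps)
    hence "b31 + b23 * u * w = (b23 + b31) * w" using nz by simp
    thus ?thesis by (simp add: algebra_simps)
  qed
  have "u = 1 \<and> v = 1 \<and> w = 1"
    by (rule uvw[OF nz(2) nz(5) nz(8) _ unz e1 e2 e3]) (use snz sdef in simp)
  hence one: "u = 1" "v = 1" "w = 1" by auto
  show "a12_3 = a23 * a31 / s \<and> a23_1 = a31 * a12 / s \<and> a31_2 = a12 * a23 / s \<and>
      b12_3 = c23 * b31 / s \<and> b23_1 = c31 * b12 / s \<and> b31_2 = c12 * b23 / s \<and>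
      c12_3 = b23 * c31 / s \<and> c23_1 = b31 * c12 / s \<and> c31_2 = b12 * c23 / s"
    using E bu bv bw cu cv cw one snz by (simp add: field_simps)
qed

theorem theorem11:
  fixes a12 b12 c12 a23 b23 c23 a31 b31 c31
        a12_3 b12_3 c12_3 a23_1 b23_1 c23_1 a31_2 b31_2 c31_2 :: complex
  assumes nz: "a12 \<noteq> 0" "b12 \<noteq> 0" "c12 \<noteq> 0" "a23 \<noteq> 0" "b23 \<noteq> 0" "c23 \<noteq> 0"
              "a31 \<noteq> 0" "b31 \<noteq> 0" "c31 \<noteq> 0"
              "a12_3 \<noteq> 0" "b12_3 \<noteq> 0" "c12_3 \<noteq> 0" "a23_1 \<noteq> 0" "b23_1 \<noteq> 0" "c23_1 \<noteq> 0"
              "a31_2 \<noteq> 0" "b31_2 \<noteq> 0" "c31_2 \<noteq> 0"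
    and sq: "b12 * c12 = a12^2" "b23 * c23 = a23^2" "b31 * c31 = a31^2"
            "b12_3 * c12_3 = a12_3^2" "b23_1 * c23_1 = a23_1^2" "b31_2 * c31_2 = a31_2^2"
    and sigma: "b12 + b23 + b31 \<noteq> 0"
  shows "rank (corner_matrix (S123 a12 b12 c12 a23 b23 c23 a31 b31 c31
                 a12_3 b12_3 c12_3 a23_1 b23_1 c23_1 a31_2 b31_2 c31_2)) = 1
    \<longleftrightarrow>
    (let \<Sigma> = b12 + b23 + b31 in
      a12_3 = a23 * a31 / \<Sigma> \<and> a23_1 = a31 * a12 / \<Sigma> \<and> a31_2 = a12 * a23 / \<Sigma> \<and>
      b12_3 = c23 * b31 / \<Sigma> \<and> b23_1 = c31 * b12 / \<Sigma> \<and> b31_2 = c12 * b23 / \<Sigma> \<and>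
      c12_3 = b23 * c31 / \<Sigma> \<and> c23_1 = b31 * c12 / \<Sigma> \<and> c31_2 = b12 * c23 / \<Sigma>)"
  unfolding Let_def
  using rank_cond[OF sigma refl] alg[OF nz sq refl sigma] by simp

end
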